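(* Assume $|\mathbb O|\ge 2$ and let $\mathcal X_0=\{x\in\mathbb O^n: x_i=\theta \text{ for some } i\in\mathcal V\}$. The following are equivalent: (1) for every $x(0)\in\mathcal X_0$, and along any update sequence, the PID opinion dynamics almost surely converges to the consensus state $x_1=\cdots=x_n=\theta$ in finite time; (2) the only non-empty strictly cohesive subset of $\mathcal V$ is $\mathcal V$ itself.
   Context: Let $n\ge 1$, $\mathcal V=\{1,\dots,n\}$, and let $W=(w_{ij})$ be an $n\times n$ row-stochastic matrix (nonnegative entries, each row summing to $1$). The opinion set is a finite set of consecutive integers $\mathbb O=\{k,k+1,\dots,k+s\}$, and $\theta\in\mathbb O$ is a fixed "truth". For $x\in\mathbb O^n$, $i\in\mathcal V$, $z\in\mathbb O$, define $C^i_{\mathrm{social}}(z;x)=\sum_{j=1}^n w_{ij}|z-x_j|$ and $C^i_{\mathrm{cog}}(z)=|z-\theta|$, and $P_i(x)=\{z\in\mathbb O: C^i_{\mathrm{social}}(z;x)\le C^i_{\mathrm{social}}(x_i;x),\ |z-\theta|\le |x_i-\theta|\}$. PID opinion dynamics: starting from $x(0)$, at each time $t+1$ a node $i$ is chosen uniformly at random from $\mathcal V$ and sets $x_i(t+1)$ to an element chosen at random from $P_i(x(t))$, each element having positive probability; all other nodes keep their opinions. A set $\mathcal M\subseteq\mathcal V$ is strictly cohesive if $\sum_{j\in\mathcal M}w_{ij}>\tfrac12$ for every $i\in\mathcal M$. *)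

theory Defs
  imports "HOL-Probability.Probability"
begin

text \<open>Nodes are the elements of a finite (nonempty) type 'n; states are maps 'n \<Rightarrow> int.
  The opinion set is O = {k..k+s}.\<close>

definition row_stochastic :: "('n::finite \<Rightarrow> 'n \<Rightarrow> real) \<Rightarrow> bool" where
  "row_stochastic W \<longleftrightarrow> (\<forall>i j. 0 \<le> W i j) \<and> (\<forall>i. (\<Sum>j\<in>UNIV. W i j) = 1)"

definition social_cost :: "('n::finite \<Rightarrow> 'n \<Rightarrow> real) \<Rightarrow> ('n \<Rightarrow> int) \<Rightarrow> 'n \<Rightarrow> int \<Rightarrow> real" where
  "social_cost W x i z = (\<Sum>j\<in>UNIV. W i j * real_of_int \<bar>z - x j\<bar>)"

definition cog_cost :: "int \<Rightarrow> int \<Rightarrow> real" where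
  "cog_cost \<theta> z = real_of_int \<bar>z - \<theta>\<bar>"

definition PID_set :: "('n::finite \<Rightarrow> 'n \<Rightarrow> real) \<Rightarrow> int set \<Rightarrow> int \<Rightarrow> ('n \<Rightarrow> int) \<Rightarrow> 'n \<Rightarrow> int set" where
  "PID_set W Op \<theta> x i = {z \<in> Op. social_cost W x i z \<le> social_cost W x i (x i) \<and> cog_cost \<theta> z \<le> cog_cost \<theta> (x i)}"

definition admissible_rule :: "('n::finite \<Rightarrow> 'n \<Rightarrow> real) \<Rightarrow> int set \<Rightarrow> int \<Rightarrow> (('n \<Rightarrow> int) \<Rightarrow> 'n \<Rightarrow> int pmf) \<Rightarrow> bool" where
  "admissible_rule W Op \<theta> q \<longleftrightarrow> (\<forall>x i. (\<forall>j. x j \<in> Op) \<longrightarrow> set_pmf (q x i) = PID_set W Op \<theta> x i)"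

definition PID_step :: "(('n::finite \<Rightarrow> int) \<Rightarrow> 'n \<Rightarrow> int pmf) \<Rightarrow> ('n \<Rightarrow> int) \<Rightarrow> ('n \<Rightarrow> int) pmf" where
  "PID_step q x = bind_pmf (pmf_of_set UNIV) (\<lambda>i. map_pmf (\<lambda>z. x(i := z)) (q x i))"

fun PID_traj :: "(('n::finite \<Rightarrow> int) \<Rightarrow> 'n \<Rightarrow> int pmf) \<Rightarrow> ('n \<Rightarrow> int) \<Rightarrow> nat \<Rightarrow> ('n \<Rightarrow> int) list pmf" where
  "PID_traj q x0 0 = return_pmf [x0]"
| "PID_traj q x0 (Suc t) = bind_pmf (PID_traj q x0 t) (\<lambda>xs. map_pmf (\<lambda>y. xs @ [y]) (PID_step q (last xs)))"

definition consensus_prob :: "(('n::finite \<Rightarrow> int) \<Rightarrow> 'n \<Rightarrow> int pmf) \<Rightarrow> int \<Rightarrow> ('n \<Rightarrow> int) \<Rightarrow> nat \<Rightarrow> real" where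
  "consensus_prob q \<theta> x0 t = measure_pmf.prob (PID_traj q x0 t) {xs. \<exists>y\<in>set xs. \<forall>i. y i = \<theta>}"

definition strictly_cohesive :: "('n::finite \<Rightarrow> 'n \<Rightarrow> real) \<Rightarrow> 'n set \<Rightarrow> bool" where
  "strictly_cohesive W M \<longleftrightarrow> (\<forall>i\<in>M. (\<Sum>j\<in>M. W i j) > 1/2)"

end

theory Submission
  imports Defs
begin

lemma sum_split_compl:
  fixes f :: "'n::finite \<Rightarrow> real"
  shows "(\<Sum>j\<in>UNIV. f j) = (\<Sum>j\<in>M. f j) + (\<Sum>j\<in>-M. f j)"
proof -
  have "(UNIV::'n set) = M \<union> -M" by auto
  then have "(\<Sum>j\<in>UNIV. f j) = (\<Sum>j\<in>M \<union> -M. f j)" by simp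
  also have "\<dots> = (\<Sum>j\<in>M. f j) + (\<Sum>j\<in>-M. f j)" by (rule sum.union_disjoint) auto
  finally show ?thesis .
qed

lemma sum_if_pm:
  fixes W :: "'n::finite \<Rightarrow> real"
  shows "(\<Sum>j\<in>UNIV. W j * (if j \<in> M then d else - d)) = d * ((\<Sum>j\<in>M. W j) - (\<Sum>j\<in>-M. W j))"
proof -
  have "(\<Sum>j\<in>UNIV. W j * (if j \<in> M then d else - d)) = (\<Sum>j\<in>M. W j * (if j \<in> M then d else - d)) + (\<Sum>j\<in>-M. W j * (if j \<in> M then d else - d))"
    by (rule sum_split_compl)
  also have "\<dots> = (\<Sum>j\<in>M. W j * d) + (\<Sum>j\<in>-M. W j * (- d))"
    by (auto intro!: sum.cong arg_cong2[where f="(+)"])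
  also have "\<dots> = d * (\<Sum>j\<in>M. W j) - d * (\<Sum>j\<in>-M. W j)"
    by (simp add: sum_distrib_left sum_negf mult.commute)
  finally show ?thesis by (simp add: right_diff_distrib)
qed

lemma PID_set_fixed:
  fixes W :: "'n::finite \<Rightarrow> 'n \<Rightarrow> real"
  assumes rs: "row_stochastic W" and M: "strictly_cohesive W M" and a: "a \<noteq> \<theta>" "a \<in> Op" "\<theta> \<in> Op"
    and x: "x = (\<lambda>j. if j \<in> M then a else \<theta>)"
  shows "PID_set W Op \<theta> x i = {x i}"
proof
  show "{x i} \<subseteq> PID_set W Op \<theta> x i" using a x by (auto simp: PID_set_def)
next
  show "PID_set W Op \<theta> x i \<subseteq> {x i}"
  proof
    fix z assume z: "z \<in> PID_set W Op \<theta> x i"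
    show "z \<in> {x i}"
    proof (cases "i \<in> M")
      case False
      then show ?thesis using z x by (auto simp: PID_set_def cog_cost_def)
    next
      case True
      have xi: "x i = a" using True x by simp
      have sc: "social_cost W x i z \<le> social_cost W x i a" using z xi by (auto simp: PID_set_def)
      have pt: "W i j * real_of_int \<bar>z - x j\<bar> \<ge> W i j * real_of_int \<bar>a - x j\<bar> + W i j * (if j \<in> M then real_of_int \<bar>z - a\<bar> else - real_of_int \<bar>z - a\<bar>)" for j
      proof -
        have w: "W i j \<ge> 0" using rs by (simp add: row_stochastic_def)
        have "real_of_int \<bar>z - x j\<bar> \<ge> real_of_int \<bar>a - x j\<bar> + (if j \<in> M then real_of_int \<bar>z - a\<bar> else - real_of_int \<bar>z - a\<bar>)"
          using x by auto
        then show ?thesis using w by (metis distrib_left mult_left_mono)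
      qed
      have "social_cost W x i z \<ge> social_cost W x i a + real_of_int \<bar>z - a\<bar> * ((\<Sum>j\<in>M. W i j) - (\<Sum>j\<in>-M. W i j))"
      proof -
        have "(\<Sum>j\<in>UNIV. W i j * real_of_int \<bar>a - x j\<bar> + W i j * (if j \<in> M then real_of_int \<bar>z - a\<bar> else - real_of_int \<bar>z - a\<bar>))
            \<le> (\<Sum>j\<in>UNIV. W i j * real_of_int \<bar>z - x j\<bar>)"
          by (rule sum_mono) (rule pt)
        then show ?thesis unfolding social_cost_def by (simp add: sum.distrib sum_if_pm)
      qed
      moreover have "(\<Sum>j\<in>M. W i j) + (\<Sum>j\<in>-M. W i j) = 1"
        using rs sum_split_compl[of "W i" M] by (simp add: row_stochastic_def)
      moreover have "(\<Sum>j\<in>M. W i j) > 1/2" using M True by (simp add: strictly_cohesive_def)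
      ultimately have "real_of_int \<bar>z - a\<bar> * ((\<Sum>j\<in>M. W i j) - (\<Sum>j\<in>-M. W i j)) \<le> 0"
        "(\<Sum>j\<in>M. W i j) - (\<Sum>j\<in>-M. W i j) > 0" using sc by linarith+
      then have "real_of_int \<bar>z - a\<bar> \<le> 0" by (simp add: mult_le_0_iff)
      then show ?thesis using xi by simp
    qed
  qed
qed

definition Vf :: "int \<Rightarrow> int \<Rightarrow> ('n::finite \<Rightarrow> int) \<Rightarrow> int" where
  "Vf s \<theta> x = (\<Sum>i\<in>UNIV. min \<bar>x i - \<theta>\<bar> s)"

lemma progress:
  fixes W :: "'n::finite \<Rightarrow> 'n \<Rightarrow> real"
  assumes rs: "row_stochastic W"
    and coh: "\<forall>M. M \<noteq> {} \<and> strictly_cohesive W M \<longrightarrow> M = UNIV"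
    and th: "\<theta> \<in> {k..k+s}"
    and x: "\<forall>i. x i \<in> {k..k+s}" and ex: "\<exists>i. x i = \<theta>" and nc: "\<not> (\<forall>i. x i = \<theta>)"
  shows "\<exists>i z. z \<in> PID_set W {k..k+s} \<theta> x i \<and> Vf s \<theta> (x(i:=z)) < Vf s \<theta> x"
proof -
  define T where "T = {j. x j \<noteq> \<theta>}"
  have "T \<noteq> {}" using nc T_def by auto
  moreover have "T \<noteq> UNIV" using ex T_def by auto
  ultimately have "\<not> strictly_cohesive W T" using coh by blast
  then obtain i where iT: "i \<in> T" and wT: "(\<Sum>j\<in>T. W i j) \<le> 1/2"
    by (auto simp: strictly_cohesive_def not_less)
  have xi: "x i \<noteq> \<theta>" using iT T_def by auto
  define z where "z = x i + sgn (\<theta> - x i)"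
  have zd: "\<bar>z - \<theta>\<bar> = \<bar>x i - \<theta>\<bar> - 1" using xi unfolding z_def
    by (cases "x i < \<theta>") (auto simp: sgn_if)
  have zd1: "\<bar>z - x i\<bar> = 1" using xi unfolding z_def by (auto simp: sgn_if)
  have zO: "z \<in> {k..k+s}" using xi x[rule_format, of i] th unfolding z_def
    by (cases "x i < \<theta>") (auto simp: sgn_if)
  have pt: "W i j * real_of_int \<bar>z - x j\<bar> \<le> W i j * real_of_int \<bar>x i - x j\<bar> + W i j * (if j \<in> T then 1 else - 1)" for j
  proof -
    have w: "W i j \<ge> 0" using rs by (simp add: row_stochastic_def)
    have "real_of_int \<bar>z - x j\<bar> \<le> real_of_int \<bar>x i - x j\<bar> + (if j \<in> T then 1 else - 1)"
    proof (cases "j \<in> T")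
      case True then show ?thesis using zd1 by simp
    next
      case False then have "x j = \<theta>" using T_def by auto
      then show ?thesis using zd False by simp
    qed
    then show ?thesis using w by (metis distrib_left mult_left_mono)
  qed
  have "social_cost W x i z \<le> social_cost W x i (x i) + ((\<Sum>j\<in>T. W i j) - (\<Sum>j\<in>-T. W i j))"
  proof -
    have "(\<Sum>j\<in>UNIV. W i j * real_of_int \<bar>z - x j\<bar>) \<le> (\<Sum>j\<in>UNIV. W i j * real_of_int \<bar>x i - x j\<bar> + W i j * (if j \<in> T then 1 else - 1))"
      by (rule sum_mono) (rule pt)
    then show ?thesis unfolding social_cost_def by (simp add: sum.distrib sum_if_pm)
  qed
  moreover have "(\<Sum>j\<in>T. W i j) + (\<Sum>j\<in>-T. W i j) = 1"
    using rs sum_split_compl[of "W i" T] by (simp add: row_stochastic_def)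
  ultimately have sc: "social_cost W x i z \<le> social_cost W x i (x i)" using wT by linarith
  have cg: "cog_cost \<theta> z \<le> cog_cost \<theta> (x i)" using zd by (simp add: cog_cost_def)
  have zP: "z \<in> PID_set W {k..k+s} \<theta> x i" using zO sc cg by (simp add: PID_set_def)
  have "Vf s \<theta> (x(i:=z)) < Vf s \<theta> x" unfolding Vf_def
  proof (rule sum_strict_mono_ex1)
    show "\<forall>j\<in>UNIV. min \<bar>(x(i := z)) j - \<theta>\<bar> s \<le> min \<bar>x j - \<theta>\<bar> s" using zd by auto
    show "\<exists>j\<in>UNIV. min \<bar>(x(i := z)) j - \<theta>\<bar> s < min \<bar>x j - \<theta>\<bar> s"
      using zd x[rule_format, of i] th by (intro bexI[of _ i]) auto
  qed auto
  then show ?thesis using zP by blast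
qed

lemma finite_states: "finite {x::'n::finite \<Rightarrow> int. \<forall>i. x i \<in> {k..k+s}}"
proof -
  have "{x::'n \<Rightarrow> int. \<forall>i. x i \<in> {k..k+s}} = Pi\<^sub>E UNIV (\<lambda>_. {k..k+s})"
    by (auto simp: PiE_UNIV_domain Pi_def)
  then show ?thesis by (simp add: finite_PiE)
qed

lemma set_PID_step: "set_pmf (PID_step q x) = (\<Union>i. (\<lambda>z. x(i:=z)) ` set_pmf (q x i))"
  by (simp add: PID_step_def)

lemma step_support:
  assumes adm: "admissible_rule W {k..k+s} \<theta> q" and xO: "\<forall>i. x i \<in> {k..k+s}"
    and y: "y \<in> set_pmf (PID_step q x)"
  shows "(\<forall>i. y i \<in> {k..k+s}) \<and> (\<forall>i. x i = \<theta> \<longrightarrow> y i = \<theta>) \<and> Vf s \<theta> y \<le> Vf s \<theta> x"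
proof -
  obtain i z where z: "z \<in> set_pmf (q x i)" and yd: "y = x(i:=z)" using y by (auto simp: set_PID_step)
  have zP: "z \<in> PID_set W {k..k+s} \<theta> x i" using adm xO z by (simp add: admissible_rule_def)
  then have zO: "z \<in> {k..k+s}" and zc: "\<bar>z - \<theta>\<bar> \<le> \<bar>x i - \<theta>\<bar>" by (auto simp: PID_set_def cog_cost_def)
  have "Vf s \<theta> y \<le> Vf s \<theta> x" unfolding Vf_def yd
    by (rule sum_mono) (use zc in auto)
  then show ?thesis using zO xO zc yd by auto
qed

lemma progress_step:
  fixes W :: "'n::finite \<Rightarrow> 'n \<Rightarrow> real"
  assumes adm: "admissible_rule W {k..k+s} \<theta> q" and rs: "row_stochastic W"
    and coh: "\<forall>M. M \<noteq> {} \<and> strictly_cohesive W M \<longrightarrow> M = UNIV"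
    and th: "\<theta> \<in> {k..k+s}"
    and x: "\<forall>i. x i \<in> {k..k+s}" and ex: "\<exists>i. x i = \<theta>" and nc: "\<not> (\<forall>i. x i = \<theta>)"
  shows "measure_pmf.prob (PID_step q x) {y. Vf s \<theta> y < Vf s \<theta> x} > 0"
proof -
  obtain i z where zP: "z \<in> PID_set W {k..k+s} \<theta> x i" and lt: "Vf s \<theta> (x(i:=z)) < Vf s \<theta> x"
    using progress[OF rs coh th x ex nc] by blast
  have "z \<in> set_pmf (q x i)" using adm x zP by (simp add: admissible_rule_def)
  then have "x(i:=z) \<in> set_pmf (PID_step q x)" by (auto simp: set_PID_step)
  then show ?thesis using lt by (intro measure_pmf_posI) auto
qed

lemma delta_exists:
  fixes W :: "'n::finite \<Rightarrow> 'n \<Rightarrow> real"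
  assumes adm: "admissible_rule W {k..k+s} \<theta> q" and rs: "row_stochastic W"
    and coh: "\<forall>M. M \<noteq> {} \<and> strictly_cohesive W M \<longrightarrow> M = UNIV"
    and th: "\<theta> \<in> {k..k+s}"
  shows "\<exists>\<delta>>0. \<forall>x. (\<forall>i. x i \<in> {k..k+s}) \<and> (\<exists>i. x i = \<theta>) \<and> \<not> (\<forall>i. x i = \<theta>) \<longrightarrow>
           \<delta> \<le> measure_pmf.prob (PID_step q x) {y. Vf s \<theta> y < Vf s \<theta> x}"
proof -
  define B where "B = {x::'n \<Rightarrow> int. (\<forall>i. x i \<in> {k..k+s}) \<and> (\<exists>i. x i = \<theta>) \<and> \<not> (\<forall>i. x i = \<theta>)}"
  define f where "f x = measure_pmf.prob (PID_step q x) {y. Vf s \<theta> y < Vf s \<theta> x}" for x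
  have fin: "finite B" by (rule finite_subset[OF _ finite_states[of k s]]) (auto simp: B_def)
  show ?thesis
  proof (cases "B = {}")
    case True
    then show ?thesis unfolding B_def by (intro exI[of _ 1]) auto
  next
    case False
    have pos: "\<forall>x\<in>B. f x > 0" unfolding f_def B_def
      using progress_step[OF adm rs coh th] by blast
    have "Min (f ` B) > 0" using fin False pos by (simp add: Min_gr_iff)
    moreover have "\<forall>x\<in>B. Min (f ` B) \<le> f x" using fin by simp
    ultimately obtain d where "d > 0" "\<forall>x\<in>B. d \<le> f x" by blast
    then show ?thesis unfolding B_def f_def by blast
  qed
qed

definition Dl where "Dl q x0 t = map_pmf last (PID_traj q x0 t)"

lemma Dl_Suc: "Dl q x0 (Suc t) = bind_pmf (Dl q x0 t) (PID_step q)"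
  by (simp add: Dl_def map_bind_pmf bind_map_pmf pmf.map_comp o_def)

lemma Dl_support:
  assumes adm: "admissible_rule W {k..k+s} \<theta> q"
    and x0: "\<forall>i. x0 i \<in> {k..k+s}" "\<exists>i. x0 i = \<theta>"
  shows "x \<in> set_pmf (Dl q x0 t) \<Longrightarrow> (\<forall>i. x i \<in> {k..k+s}) \<and> (\<exists>i. x i = \<theta>)"
proof (induction t arbitrary: x)
  case 0
  then show ?case using x0 by (simp add: Dl_def)
next
  case (Suc t)
  then obtain x' where x': "x' \<in> set_pmf (Dl q x0 t)" and x: "x \<in> set_pmf (PID_step q x')"
    by (auto simp: Dl_Suc)
  then show ?case using Suc.IH[OF x'] step_support[OF adm _ x] by blast
qed

lemma Vf_nonneg: "s \<ge> 0 \<Longrightarrow> 0 \<le> Vf s \<theta> x"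
  unfolding Vf_def by (intro sum_nonneg) auto

lemma Vf_le: "Vf s \<theta> (x::'n::finite \<Rightarrow> int) \<le> int CARD('n) * s"
  unfolding Vf_def using sum_bounded_above[of UNIV "\<lambda>i. min \<bar>x i - \<theta>\<bar> s" s] by simp

lemma min_abs_eq0: "(s::int) \<ge> 1 \<Longrightarrow> min \<bar>a\<bar> s = 0 \<longleftrightarrow> a = 0"
  by auto

lemma Vf_zero_iff: "s \<ge> 1 \<Longrightarrow> Vf s \<theta> x = 0 \<longleftrightarrow> (\<forall>i. x i = \<theta>)"
  unfolding Vf_def by (subst sum_nonneg_eq_0_iff) (auto simp: min_abs_eq0)

lemma step_finite:
  assumes adm: "admissible_rule W {k..k+s} \<theta> q" and xO: "\<forall>i. x i \<in> {k..k+s}"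
  shows "finite (set_pmf (PID_step q x))"
  by (rule finite_subset[OF _ finite_states[of k s]]) (use step_support[OF adm xO] in auto)

lemma step_exp:
  fixes x :: "'n::finite \<Rightarrow> int"
  assumes adm: "admissible_rule W {k..k+s} \<theta> q" and xO: "\<forall>i. x i \<in> {k..k+s}"
  shows "measure_pmf.expectation (PID_step q x) (\<lambda>y. real_of_int (Vf s \<theta> y))
     \<le> real_of_int (Vf s \<theta> x) - measure_pmf.prob (PID_step q x) {y. Vf s \<theta> y < Vf s \<theta> x}"
proof -
  let ?p = "PID_step q x"
  define A where "A = {y::'n \<Rightarrow> int. Vf s \<theta> y < Vf s \<theta> x}"
  have fin: "finite (set_pmf ?p)" by (rule step_finite[OF adm xO])
  have "measure_pmf.expectation ?p (\<lambda>y. real_of_int (Vf s \<theta> y))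
     \<le> measure_pmf.expectation ?p (\<lambda>y. real_of_int (Vf s \<theta> x) - indicator A y)"
  proof (rule integral_mono_AE)
    show "integrable (measure_pmf ?p) (\<lambda>y. real_of_int (Vf s \<theta> y))"
      by (rule integrable_measure_pmf_finite[OF fin])
    show "integrable (measure_pmf ?p) (\<lambda>y. real_of_int (Vf s \<theta> x) - indicator A y)"
      by (rule integrable_measure_pmf_finite[OF fin])
    show "AE y in measure_pmf ?p. real_of_int (Vf s \<theta> y) \<le> real_of_int (Vf s \<theta> x) - indicator A y"
    proof (rule AE_pmfI)
      fix y assume "y \<in> set_pmf ?p"
      then have "Vf s \<theta> y \<le> Vf s \<theta> x" using step_support[OF adm xO] by blast
      then show "real_of_int (Vf s \<theta> y) \<le> real_of_int (Vf s \<theta> x) - indicator A y"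
        by (auto simp: A_def indicator_def)
    qed
  qed
  also have "\<dots> = real_of_int (Vf s \<theta> x) - measure_pmf.prob ?p A"
    by (subst Bochner_Integration.integral_diff)
       (auto intro: integrable_measure_pmf_finite[OF fin] simp: measure_pmf.prob_space)
  finally show ?thesis unfolding A_def .
qed

lemma integral_bind_pmf_bounded:
  fixes f :: "'a \<Rightarrow> real"
  assumes "\<And>x. \<bar>f x\<bar> \<le> B"
  shows "measure_pmf.expectation (bind_pmf M N) f = (\<integral>x. measure_pmf.expectation (N x) f \<partial>measure_pmf M)"
  unfolding measure_pmf_bind
  by (rule integral_bind[where K="count_space UNIV" and B=B and B'=1])
     (auto simp: assms measure_pmf.emeasure_space_1 measure_pmf.finite_measure measure_pmf_in_subprob_algebra)

lemma traj_nonempty: "xs \<in> set_pmf (PID_traj q x0 t) \<Longrightarrow> xs \<noteq> []"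
  by (cases t) auto

lemma sufficiency:
  fixes W :: "'n::finite \<Rightarrow> 'n \<Rightarrow> real" and x0 :: "'n \<Rightarrow> int"
  assumes adm: "admissible_rule W {k..k+s} \<theta> q" and rs: "row_stochastic W"
    and coh: "\<forall>M. M \<noteq> {} \<and> strictly_cohesive W M \<longrightarrow> M = UNIV"
    and th: "\<theta> \<in> {k..k+s}" and s1: "s \<ge> 1"
    and x0: "\<forall>i. x0 i \<in> {k..k+s}" "\<exists>i. x0 i = \<theta>"
  shows "consensus_prob q \<theta> x0 \<longlonglongrightarrow> 1"
proof -
  obtain \<delta> where d0: "\<delta> > 0" and dle: "\<And>x. (\<forall>i. x i \<in> {k..k+s}) \<and> (\<exists>i. x i = \<theta>) \<and> \<not> (\<forall>i. x i = \<theta>) \<Longrightarrow>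
           \<delta> \<le> measure_pmf.prob (PID_step q x) {y. Vf s \<theta> y < Vf s \<theta> x}"
    using delta_exists[OF adm rs coh th] by blast
  define F where "F x = real_of_int (Vf s \<theta> x)" for x :: "'n \<Rightarrow> int"
  define N where "N = {x::'n \<Rightarrow> int. \<not> (\<forall>i. x i = \<theta>)}"
  define E where "E t = measure_pmf.expectation (Dl q x0 t) F" for t
  define P where "P t = measure_pmf.prob (Dl q x0 t) N" for t
  define B where "B = real CARD('n) * real_of_int s"
  have Fb: "\<bar>F x\<bar> \<le> B" for x
  proof -
    have "0 \<le> Vf s \<theta> x" by (rule Vf_nonneg) (use s1 in linarith)
    moreover have "Vf s \<theta> x \<le> int CARD('n) * s" by (rule Vf_le)
    ultimately show ?thesis unfolding F_def B_def
      by (metis (no_types, opaque_lifting) abs_of_nonneg of_int_le_iff of_int_mult of_int_of_nat_eq of_int_0_le_iff)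
  qed
  have sup: "x \<in> set_pmf (Dl q x0 t) \<Longrightarrow> (\<forall>i. x i \<in> {k..k+s}) \<and> (\<exists>i. x i = \<theta>)" for x t
    using Dl_support[OF adm x0] by blast
  have finD: "finite (set_pmf (Dl q x0 t))" for t
    by (rule finite_subset[OF _ finite_states[of k s]]) (use sup in auto)
  have Estep: "E (Suc t) \<le> E t - \<delta> * P t" for t
  proof -
    have "E (Suc t) = (\<integral>x. measure_pmf.expectation (PID_step q x) F \<partial>measure_pmf (Dl q x0 t))"
      unfolding E_def Dl_Suc by (rule integral_bind_pmf_bounded[OF Fb])
    also have "\<dots> \<le> (\<integral>x. F x - \<delta> * indicator N x \<partial>measure_pmf (Dl q x0 t))"
    proof (rule integral_mono_AE)
      show "integrable (measure_pmf (Dl q x0 t)) (\<lambda>x. measure_pmf.expectation (PID_step q x) F)"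
        by (rule integrable_measure_pmf_finite[OF finD])
      show "integrable (measure_pmf (Dl q x0 t)) (\<lambda>x. F x - \<delta> * indicator N x)"
        by (rule integrable_measure_pmf_finite[OF finD])
      show "AE x in measure_pmf (Dl q x0 t). measure_pmf.expectation (PID_step q x) F \<le> F x - \<delta> * indicator N x"
      proof (rule AE_pmfI)
        fix x assume x: "x \<in> set_pmf (Dl q x0 t)"
        have xv: "(\<forall>i. x i \<in> {k..k+s})" "(\<exists>i. x i = \<theta>)" using sup[OF x] by auto
        have e: "measure_pmf.expectation (PID_step q x) F \<le> F x - measure_pmf.prob (PID_step q x) {y. Vf s \<theta> y < Vf s \<theta> x}"
          unfolding F_def by (rule step_exp[OF adm xv(1)])
        show "measure_pmf.expectation (PID_step q x) F \<le> F x - \<delta> * indicator N x"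
        proof (cases "x \<in> N")
          case True
          then have "\<delta> \<le> measure_pmf.prob (PID_step q x) {y. Vf s \<theta> y < Vf s \<theta> x}"
            using dle xv N_def by blast
          then show ?thesis using e True by simp
        next
          case False
          have "0 \<le> measure_pmf.prob (PID_step q x) {y::'n \<Rightarrow> int. Vf s \<theta> y < Vf s \<theta> x}" by (rule measure_nonneg)
          moreover have "indicator N x = (0::real)" using False by simp
          ultimately have "measure_pmf.expectation (PID_step q x) F \<le> F x" using e by linarith
          then show ?thesis using \<open>indicator N x = (0::real)\<close> by simp
        qed
      qed
    qed
    also have "\<dots> = E t - \<delta> * P t"
      unfolding E_def P_def
      by (subst Bochner_Integration.integral_diff)
         (auto intro: integrable_measure_pmf_finite[OF finD])
    finally show ?thesis .
  qed
  have E0: "E t \<ge> 0" for t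
  proof -
    have "\<And>x. 0 \<le> Vf s \<theta> x" by (rule Vf_nonneg) (use s1 in linarith)
    then show ?thesis unfolding E_def F_def by (intro integral_nonneg_AE) auto
  qed
  have Pn: "P t \<ge> 0" for t unfolding P_def by (rule measure_nonneg)
  have sumb: "E t + \<delta> * (\<Sum>i<t. P i) \<le> E 0" for t
  proof (induction t)
    case 0 then show ?case by simp
  next
    case (Suc t) then show ?case using Estep[of t] by (simp add: algebra_simps)
  qed
  have "(\<Sum>i<t. P i) \<le> E 0 / \<delta>" for t
  proof -
    have "\<delta> * (\<Sum>i<t. P i) \<le> E 0" using sumb[of t] E0[of t] by linarith
    then show ?thesis using d0 by (simp add: field_simps mult.commute)
  qed
  then have "summable P" using Pn by (intro summableI_nonneg_bounded) auto
  then have P0: "P \<longlonglongrightarrow> 0" by (rule summable_LIMSEQ_zero)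
  have low: "1 - P t \<le> consensus_prob q \<theta> x0 t" for t
  proof -
    let ?C = "{x::'n \<Rightarrow> int. \<forall>i. x i = \<theta>}"
    have "1 - P t = measure_pmf.prob (Dl q x0 t) ?C"
    proof -
      have "?C = space (measure_pmf (Dl q x0 t)) - N" by (auto simp: N_def)
      then show ?thesis unfolding P_def using measure_pmf.prob_compl[where M="Dl q x0 t" and A=N] by simp
    qed
    also have "\<dots> = measure_pmf.prob (PID_traj q x0 t) (last -` ?C)" by (simp add: Dl_def)
    also have "\<dots> = measure_pmf.prob (PID_traj q x0 t) (last -` ?C \<inter> set_pmf (PID_traj q x0 t))"
      by (simp add: measure_Int_set_pmf)
    also have "\<dots> \<le> consensus_prob q \<theta> x0 t"
      unfolding consensus_prob_def
    proof (rule measure_pmf.finite_measure_mono)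
      show "last -` ?C \<inter> set_pmf (PID_traj q x0 t) \<subseteq> {xs. \<exists>y\<in>set xs. \<forall>i. y i = \<theta>}"
      proof
        fix xs assume xs: "xs \<in> last -` ?C \<inter> set_pmf (PID_traj q x0 t)"
        then have "xs \<noteq> []" using traj_nonempty by blast
        then have "last xs \<in> set xs" by (rule last_in_set)
        then show "xs \<in> {xs. \<exists>y\<in>set xs. \<forall>i. y i = \<theta>}" using xs by auto
      qed
    qed simp
    finally show ?thesis .
  qed
  have up: "consensus_prob q \<theta> x0 t \<le> 1" for t
    unfolding consensus_prob_def by (rule measure_pmf.prob_le_1)
  have l1: "(\<lambda>t. 1 - P t) \<longlonglongrightarrow> 1 - 0" by (intro tendsto_diff tendsto_const P0)
  show ?thesis
  proof (rule tendsto_sandwich)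
    show "\<forall>\<^sub>F t in sequentially. 1 - P t \<le> consensus_prob q \<theta> x0 t" by (rule always_eventually) (rule allI, rule low)
    show "\<forall>\<^sub>F t in sequentially. consensus_prob q \<theta> x0 t \<le> 1" by (rule always_eventually) (rule allI, rule up)
    show "(\<lambda>t. 1 - P t) \<longlonglongrightarrow> 1" using l1 by simp
    show "(\<lambda>t. 1::real) \<longlonglongrightarrow> 1" by (rule tendsto_const)
  qed
qed

lemma necessity:
  fixes W :: "'n::finite \<Rightarrow> 'n \<Rightarrow> real"
  assumes rs: "row_stochastic W" and s1: "s \<ge> 1" and th: "\<theta> \<in> {k..k+s}"
    and M: "M \<noteq> {}" "strictly_cohesive W M" "M \<noteq> UNIV"
  shows "\<exists>q. admissible_rule W {k..k+s} \<theta> q \<and> (\<exists>x0. (\<forall>i. x0 i \<in> {k..k+s}) \<and> (\<exists>i. x0 i = \<theta>) \<and>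
            \<not> (consensus_prob q \<theta> x0 \<longlonglongrightarrow> 1))"
proof -
  define q0 where "q0 x i = pmf_of_set (PID_set W {k..k+s} \<theta> x i)" for x :: "'n \<Rightarrow> int" and i
  have adm: "admissible_rule W {k..k+s} \<theta> q0"
    unfolding admissible_rule_def
  proof (intro allI impI)
    fix x :: "'n \<Rightarrow> int" and i assume x: "\<forall>j. x j \<in> {k..k+s}"
    have "x i \<in> PID_set W {k..k+s} \<theta> x i" using x by (simp add: PID_set_def)
    moreover have "finite (PID_set W {k..k+s} \<theta> x i)"
      by (rule finite_subset[of _ "{k..k+s}"]) (auto simp: PID_set_def)
    ultimately show "set_pmf (q0 x i) = PID_set W {k..k+s} \<theta> x i"
      unfolding q0_def by (intro set_pmf_of_set) auto
  qed
  define a where "a = (if \<theta> = k then k + 1 else k)"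
  have aO: "a \<in> {k..k+s}" and an: "a \<noteq> \<theta>" using s1 th by (auto simp: a_def)
  define x0 where "x0 = (\<lambda>j. if j \<in> M then a else \<theta>)"
  have x0O: "\<forall>i. x0 i \<in> {k..k+s}" using aO th by (simp add: x0_def)
  have x0t: "\<exists>i. x0 i = \<theta>" using M(3) by (auto simp: x0_def)
  have x0n: "\<not> (\<forall>i. x0 i = \<theta>)" using M(1) an by (auto simp: x0_def)
  have stepx0: "set_pmf (PID_step q0 x0) = {x0}"
  proof -
    have "set_pmf (q0 x0 i) = {x0 i}" for i
      using adm x0O PID_set_fixed[OF rs M(2) an aO th x0_def] by (simp add: admissible_rule_def)
    then show ?thesis by (auto simp: set_PID_step)
  qed
  have trajs: "xs \<in> set_pmf (PID_traj q0 x0 t) \<Longrightarrow> xs \<noteq> [] \<and> set xs \<subseteq> {x0}" for xs t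
  proof (induction t arbitrary: xs)
    case 0 then show ?case by simp
  next
    case (Suc t)
    then obtain ys y where ys: "ys \<in> set_pmf (PID_traj q0 x0 t)" and y: "y \<in> set_pmf (PID_step q0 (last ys))"
      and xs: "xs = ys @ [y]" by auto
    have "ys \<noteq> []" "set ys \<subseteq> {x0}" using Suc.IH[OF ys] by auto
    then have "last ys = x0" using last_in_set by blast
    then have "y = x0" using y stepx0 by simp
    then show ?case using xs \<open>set ys \<subseteq> {x0}\<close> by auto
  qed
  have c0: "consensus_prob q0 \<theta> x0 t = 0" for t
    unfolding consensus_prob_def measure_pmf_zero_iff
    using trajs x0n by blast
  have "\<not> (consensus_prob q0 \<theta> x0 \<longlonglongrightarrow> 1)"
  proof
    assume "consensus_prob q0 \<theta> x0 \<longlonglongrightarrow> 1"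
    moreover have "consensus_prob q0 \<theta> x0 = (\<lambda>_. 0)" using c0 by auto
    then have "consensus_prob q0 \<theta> x0 \<longlonglongrightarrow> 0" by simp
    ultimately have "(1::real) = 0" using LIMSEQ_unique by blast
    then show False by simp
  qed
  then show ?thesis using adm x0O x0t by blast
qed

theorem corollary1:
  fixes W :: "'n::finite \<Rightarrow> 'n \<Rightarrow> real" and k s \<theta> :: int
  assumes "row_stochastic W"
    and "s \<ge> 1"
    and "\<theta> \<in> {k..k+s}"
  shows "(\<forall>q. admissible_rule W {k..k+s} \<theta> q \<longrightarrow>
            (\<forall>x0. (\<forall>i. x0 i \<in> {k..k+s}) \<and> (\<exists>i. x0 i = \<theta>) \<longrightarrow>
                  (consensus_prob q \<theta> x0 \<longlonglongrightarrow> 1)))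
     \<longleftrightarrow> (\<forall>M. M \<noteq> {} \<and> strictly_cohesive W M \<longrightarrow> M = UNIV)"
proof
  assume L: "\<forall>q. admissible_rule W {k..k+s} \<theta> q \<longrightarrow>
            (\<forall>x0. (\<forall>i. x0 i \<in> {k..k+s}) \<and> (\<exists>i. x0 i = \<theta>) \<longrightarrow>
                  (consensus_prob q \<theta> x0 \<longlonglongrightarrow> 1))"
  show "\<forall>M. M \<noteq> {} \<and> strictly_cohesive W M \<longrightarrow> M = UNIV"
  proof (intro allI impI)
    fix M :: "'n set" assume M: "M \<noteq> {} \<and> strictly_cohesive W M"
    show "M = UNIV"
    proof (rule ccontr)
      assume "M \<noteq> UNIV"
      then show False using necessity[OF assms(1,2,3) conjunct1[OF M] conjunct2[OF M]] L by blast
    qed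
  qed
next
  assume R: "\<forall>M. M \<noteq> {} \<and> strictly_cohesive W M \<longrightarrow> M = UNIV"
  show "\<forall>q. admissible_rule W {k..k+s} \<theta> q \<longrightarrow>
            (\<forall>x0. (\<forall>i. x0 i \<in> {k..k+s}) \<and> (\<exists>i. x0 i = \<theta>) \<longrightarrow>
                  (consensus_prob q \<theta> x0 \<longlonglongrightarrow> 1))"
    using sufficiency[OF _ assms(1) R assms(3) assms(2)] by blast
qed

end
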